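(* Let $K$ be a $\mathbb{Z}/2\mathbb{Z}$-pure global knot diagram in $T^2\times\mathbb{R}$ with respect to $v$. Then $pr(K)$ contains no triangle, i.e. there are no three crossings $q_1,q_2,q_3$ and three arcs of $pr(K)$ joining them pairwise whose union is a null-homotopic loop in $T^2$. In particular no Reidemeister move of type III can be performed on $K$. (This follows from the relation $[K^+_{q_3}]=\pm[K^+_{q_1}]\pm[K^+_{q_2}]$ modulo $[K]$ for such a triangle, which forbids all three classes from being nonzero in $\mathbb{Z}/2\mathbb{Z}$.)
   Context: $T^2=\mathbb{R}^2/\mathbb{Z}^2$ with fixed generators $\alpha,\beta$ of $H_1(T^2;\mathbb{Z})$; $v$ is the constant unit vector field on $T^2$ tangent to the fibres of a linear submersion $f:T^2\to S^1$ whose fibres represent $\beta$; $pr:T^2\times\mathbb{R}\to T^2$ is the projection. A knot diagram is a smooth oriented knot $K\subset T^2\times\mathbb{R}$ such that $pr|_K$ is an immersion whose only multiple points are transverse double points, called crossings. $K$ is global (with respect to $v$) if $pr(K)$ is everywhere transverse to $v$; it is oriented so that (tangent vector of $pr(K)$, $v$) is a positively oriented basis of $T^2$. For a crossing $p$, smoothing $pr(K)$ at $p$ respecting orientations yields two oriented loops $K_p^+,K_p^-$ with $[K_p^+]+[K_p^-]=[K]$ in $H_1(T^2;\mathbb{Z})$. A global knot diagram $K$ is $\mathbb{Z}/2\mathbb{Z}$-pure if (1) $H_1(T^2;\mathbb{Z})/\langle[K]\rangle\cong\mathbb{Z}$, and (2) for every crossing $p$ the class of $K_p^+$ (equivalently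 of $K_p^-$) is nonzero in $G=(H_1(T^2;\mathbb{Z})/\langle[K]\rangle)\otimes\mathbb{Z}/2\mathbb{Z}\cong\mathbb{Z}/2\mathbb{Z}$. *)

theory Defs
  imports "HOL-Analysis.Analysis" "HOL-Algebra.Elementary_Groups" "HOL-Algebra.Generated_Groups"
begin

(* ------------------------------------------------------------------
   The torus T^2 = R^2/Z^2, realised concretely as S^1 x S^1 inside C x C
   via the covering map  E(x,y) = (exp(2 pi i x), exp(2 pi i y)).
   H_1(T^2;Z) is identified with Z^2 = int x int in the standard way
   (class of a loop = displacement of a lift).
   ------------------------------------------------------------------ *)

definition torusE :: "real \<times> real \<Rightarrow> complex \<times> complex" where
  "torusE p = (cis (2 * pi * fst p), cis (2 * pi * snd p))"

definition torus :: "(complex \<times> complex) set" where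
  "torus = range torusE"

definition intpt :: "real \<times> real \<Rightarrow> int \<times> int" where
  "intpt p = (round (fst p), round (snd p))"

definition det2 :: "real \<times> real \<Rightarrow> real \<times> real \<Rightarrow> real" where
  "det2 u w = fst u * snd w - snd u * fst w"

definition smooth_curve :: "(real \<Rightarrow> 'a::real_normed_vector) \<Rightarrow> bool" where
  "smooth_curve f \<longleftrightarrow>
     (\<exists>D :: nat \<Rightarrow> real \<Rightarrow> 'a. D 0 = f \<and>
        (\<forall>n t. (D n has_vector_derivative D (Suc n) t) (at t)))"

(* ------------------------------------------------------------------
   A knot K in T^2 x R is given by a 1-periodic parametrisation
   t |-> (torusE (c t), h t), where c : R -> R^2 is a lift of pr(K).
   ------------------------------------------------------------------ *)

definition is_crossing :: "(real \<Rightarrow> real \<times> real) \<Rightarrow> real \<Rightarrow> real \<Rightarrow> bool" where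
  "is_crossing c s t \<longleftrightarrow> s - t \<notin> \<int> \<and> torusE (c s) = torusE (c t)"

definition knot_diagram :: "(real \<Rightarrow> real \<times> real) \<Rightarrow> (real \<Rightarrow> real) \<Rightarrow> bool" where
  "knot_diagram c h \<longleftrightarrow>
     smooth_curve c \<and> smooth_curve h \<and>
     (\<forall>t. torusE (c (t + 1)) = torusE (c t) \<and> h (t + 1) = h t) \<and>
     \<comment> \<open>K is embedded: the parametrisation is injective on R/Z\<close>
     (\<forall>s t. torusE (c s) = torusE (c t) \<and> h s = h t \<longrightarrow> s - t \<in> \<int>) \<and>
     \<comment> \<open>pr restricted to K is an immersion\<close>
     (\<forall>t. vector_derivative c (at t) \<noteq> 0) \<and>
     \<comment> \<open>no triple points\<close>
     (\<forall>s t u. is_crossing c s t \<and> is_crossing c t u \<longrightarrow> s - u \<in> \<int>) \<and>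
     \<comment> \<open>double points are transverse\<close>
     (\<forall>s t. is_crossing c s t \<longrightarrow>
        det2 (vector_derivative c (at s)) (vector_derivative c (at t)) \<noteq> 0)"

definition knot_class :: "(real \<Rightarrow> real \<times> real) \<Rightarrow> int \<times> int" where
  "knot_class c = intpt (c 1 - c 0)"

(* For a crossing given by parameters s,t, smoothing at it yields the loops
   "K from s to t" and "K from t to s+1"; the class of the first one is: *)
definition smoothing_class :: "(real \<Rightarrow> real \<times> real) \<Rightarrow> real \<Rightarrow> real \<Rightarrow> int \<times> int" where
  "smoothing_class c s t = intpt (c t - c s)"

(* global with respect to v, with the orientation convention
   (tangent vector of pr(K), v) positively oriented *)
definition global_wrt :: "real \<times> real \<Rightarrow> (real \<Rightarrow> real \<times> real) \<Rightarrow> bool" where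
  "global_wrt v c \<longleftrightarrow> (\<forall>t. det2 (vector_derivative c (at t)) v > 0)"

definition Z2_group :: "(int \<times> int) monoid" where
  "Z2_group = DirProd integer_group integer_group"

(* x is nonzero in G = (Z^2/<k>) tensor Z/2 = Z^2/(<k> + 2 Z^2) *)
definition nonzero_in_G :: "int \<times> int \<Rightarrow> int \<times> int \<Rightarrow> bool" where
  "nonzero_in_G k x \<longleftrightarrow>
     \<not> (\<exists>(m::int) (y::int \<times> int). x = (m * fst k + 2 * fst y, m * snd k + 2 * snd y))"

definition Z2_pure :: "(real \<Rightarrow> real \<times> real) \<Rightarrow> bool" where
  "Z2_pure c \<longleftrightarrow>
     (Z2_group Mod (generate Z2_group {knot_class c}) \<cong> integer_group) \<and>
     (\<forall>s t. is_crossing c s t \<longrightarrow> nonzero_in_G (knot_class c) (smoothing_class c s t))"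

(* pr(K) contains a triangle: crossings q1 = E(c r3) = E(c p1), q2 = E(c r1) = E(c p2),
   q3 = E(c r2) = E(c p3), pairwise distinct; arcs of pr(K) given by the parameter
   intervals between p_i and r_i (traversed in either direction, proper sub-arcs);
   at each corner the loop switches branch (the two parameters form a crossing);
   the concatenated loop is null-homotopic in T^2. *)
definition has_triangle :: "(real \<Rightarrow> real \<times> real) \<Rightarrow> bool" where
  "has_triangle c \<longleftrightarrow>
     (\<exists>p1 r1 p2 r2 p3 r3.
        is_crossing c r3 p1 \<and> is_crossing c r1 p2 \<and> is_crossing c r2 p3 \<and>
        torusE (c p1) \<noteq> torusE (c p2) \<and> torusE (c p2) \<noteq> torusE (c p3) \<and>
        torusE (c p1) \<noteq> torusE (c p3) \<and>
        \<bar>r1 - p1\<bar> < 1 \<and> \<bar>r2 - p2\<bar> < 1 \<and> \<bar>r3 - p3\<bar> < 1 \<and>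
        (\<exists>z. homotopic_loops torus
               (subpath p1 r1 (torusE \<circ> c) +++ subpath p2 r2 (torusE \<circ> c)
                  +++ subpath p3 r3 (torusE \<circ> c))
               (linepath z z)))"

end

theory Submission imports Defs "HOL-Complex_Analysis.Complex_Analysis" begin

lemma wn_sub:
  assumes f: "continuous_on UNIV f"
  shows "winding_number (subpath a b (\<lambda>t. cis (2*pi*f t))) 0 = complex_of_real (f b - f a)"
proof -
  define q where "q = (\<lambda>t. \<i> * complex_of_real (2*pi*f t))"
  have e: "(\<lambda>t. cis (2*pi*f t)) = exp \<circ> q"
    by (auto simp: q_def cis_conv_exp)
  have cq: "continuous_on UNIV q" unfolding q_def
    by (intro continuous_intros continuous_on_compose2[OF f]) auto
  have "path (subpath a b q)" unfolding path_def subpath_def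
    by (rule continuous_on_compose2[OF cq]) (auto intro!: continuous_intros)
  then have "winding_number (exp \<circ> subpath a b q) 0 = (q b - q a) / (2 * of_real pi * \<i>)"
    using winding_number_compose_exp by simp
  also have "\<dots> = complex_of_real (f b - f a)"
    by (simp add: q_def field_simps)
  finally show ?thesis by (simp add: e subpath_image)
qed

lemma cis_int:
  assumes "cis (2*pi*x) = cis (2*pi*y)"
  shows "x - y = of_int (round (x - y))"
proof -
  from assms have "exp (\<i> * complex_of_real (2*pi*x)) = exp (\<i> * complex_of_real (2*pi*y))"
    by (simp add: cis_conv_exp)
  then obtain n::int where "\<i> * complex_of_real (2*pi*x) = \<i> * complex_of_real (2*pi*y) + (of_int (2 * n) * pi) * \<i>"
    by (auto simp: exp_eq)
  then have "Im (\<i> * complex_of_real (2*pi*x)) = Im (\<i> * complex_of_real (2*pi*y) + (of_int (2 * n) * pi) * \<i>)"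
    by simp
  then have "2*pi*x = 2*pi*y + 2*n*pi" by simp
  then have "pi * (2 * (x - y - n)) = 0" by (simp add: algebra_simps)
  then have "x - y = n" by simp
  then show ?thesis by simp
qed

lemma path_sub:
  assumes "continuous_on UNIV g" shows "path (subpath a b g)"
  unfolding path_def subpath_def
  by (rule continuous_on_compose2[OF assms]) (auto intro!: continuous_intros)

lemma proj_sum:
  fixes P :: "complex \<times> complex \<Rightarrow> complex" and f :: "real \<Rightarrow> real"
    and g :: "real \<Rightarrow> complex \<times> complex"
  assumes cP: "continuous_on UNIV P" and Pnz: "\<forall>x\<in>S. P x \<noteq> 0"
    and Pg: "P \<circ> g = (\<lambda>t. cis (2*pi*f t))" and cf: "continuous_on UNIV f"
    and j1: "g r1 = g p2" and j2: "g r2 = g p3"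
    and h: "homotopic_loops S (subpath p1 r1 g +++ subpath p2 r2 g +++ subpath p3 r3 g) (linepath z z)"
  shows "(f r1 - f p1) + (f r2 - f p2) + (f r3 - f p3) = 0"
proof -
  define \<gamma> where "\<gamma> = (\<lambda>t. cis (2*pi*f t))"
  have cg: "continuous_on UNIV \<gamma>" unfolding \<gamma>_def
    by (intro continuous_intros continuous_on_compose2[OF cf]) auto
  have PS: "P \<in> S \<rightarrow> - {0}" using Pnz by auto
  have h2: "homotopic_loops (-{0}) (P \<circ> (subpath p1 r1 g +++ subpath p2 r2 g +++ subpath p3 r3 g))
             (P \<circ> linepath z z)"
    by (rule homotopic_loops_continuous_image[OF h continuous_on_subset[OF cP] PS]) auto
  have e1: "P \<circ> (subpath p1 r1 g +++ subpath p2 r2 g +++ subpath p3 r3 g)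
      = subpath p1 r1 \<gamma> +++ subpath p2 r2 \<gamma> +++ subpath p3 r3 \<gamma>"
    by (simp add: path_compose_join subpath_image[symmetric] Pg \<gamma>_def)
  have "z \<in> S" using homotopic_loops_imp_subset[OF h] by (auto simp: path_image_def linepath_refl)
  then have Pz: "P z \<noteq> 0" using Pnz by auto
  have e2: "P \<circ> linepath z z = linepath (P z) (P z)" by (simp add: linepath_refl o_def)
  have w0: "winding_number (subpath p1 r1 \<gamma> +++ subpath p2 r2 \<gamma> +++ subpath p3 r3 \<gamma>) 0 = 0"
    using winding_number_homotopic_loops[OF h2] e1 e2 Pz by simp
  have gj1: "\<gamma> r1 = \<gamma> p2" using j1 Pg unfolding \<gamma>_def by (metis comp_apply)
  have gj2: "\<gamma> r2 = \<gamma> p3" using j2 Pg unfolding \<gamma>_def by (metis comp_apply)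
  have nz: "0 \<notin> path_image (subpath a b \<gamma>)" for a b
    by (auto simp: path_image_def subpath_def \<gamma>_def)
  have ps: "path (subpath a b \<gamma>)" for a b using path_sub[OF cg] .
  have "winding_number (subpath p1 r1 \<gamma> +++ subpath p2 r2 \<gamma> +++ subpath p3 r3 \<gamma>) 0
     = winding_number (subpath p1 r1 \<gamma>) 0 + (winding_number (subpath p2 r2 \<gamma>) 0 + winding_number (subpath p3 r3 \<gamma>) 0)"
    apply (subst winding_number_join)
    using ps nz gj1 gj2 apply (auto simp: path_image_join)[5]
    apply (subst winding_number_join)
    using ps nz gj1 gj2 apply (auto simp: path_image_join)
    done
  also have "\<dots> = complex_of_real ((f r1 - f p1) + (f r2 - f p2) + (f r3 - f p3))"
    unfolding \<gamma>_def wn_sub[OF cf] by simp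
  finally have "complex_of_real ((f r1 - f p1) + (f r2 - f p2) + (f r3 - f p3)) = 0"
    using w0 by metis
  then show ?thesis by (simp only: of_real_eq_0_iff)
qed


lemma Z2_mult [simp]: "a \<otimes>\<^bsub>Z2_group\<^esub> b = (fst a + fst b, snd a + snd b)"
  by (simp add: Z2_group_def DirProd_def integer_group_def split: prod.splits)

lemma Z2_one [simp]: "\<one>\<^bsub>Z2_group\<^esub> = (0, 0)"
  by (simp add: Z2_group_def DirProd_def integer_group_def)

lemma Z2_carrier [simp]: "carrier Z2_group = UNIV"
  by (simp add: Z2_group_def)

lemma Z2_grp: "group Z2_group"
  unfolding Z2_group_def by (intro DirProd_group group_integer_group)

lemma Z2_inv [simp]: "inv\<^bsub>Z2_group\<^esub> a = (- fst a, - snd a)"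
  by (rule group.inv_equality[OF Z2_grp]) auto

lemma Z2_comm: "comm_group Z2_group"
  by (rule group.group_comm_groupI[OF Z2_grp]) auto

lemma gen_sub: "generate Z2_group {k} \<subseteq> {(m * fst k, m * snd k) | m. True}"
proof
  fix x assume "x \<in> generate Z2_group {k}"
  then show "x \<in> {(m * fst k, m * snd k) | m. True}"
  proof (induction rule: generate.induct)
    case one
    then show ?case by (auto intro!: exI[of _ 0])
  next
    case (incl h)
    then show ?case by (auto intro!: exI[of _ 1])
  next
    case (inv h)
    then show ?case by (auto intro!: exI[of _ "-1"])
  next
    case (eng h1 h2)
    then obtain m1 m2 where "h1 = (m1 * fst k, m1 * snd k)" "h2 = (m2 * fst k, m2 * snd k)" by auto
    then show ?case by (auto intro!: exI[of _ "m1 + m2"] simp: algebra_simps)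
  qed
qed

lemma iso_parity:
  assumes iso: "Z2_group Mod (generate Z2_group {k}) \<cong> integer_group" and k0: "k \<noteq> (0, 0)"
  shows "odd (fst k) \<or> odd (snd k)"
proof (rule ccontr)
  assume "\<not> ?thesis"
  then obtain a b where kab: "k = (2 * a, 2 * b)"
    by (metis evenE not_not prod.collapse)
  define H where "H = generate Z2_group {k}"
  interpret G: comm_group Z2_group by (rule Z2_comm)
  have sub: "subgroup H Z2_group" unfolding H_def by (rule G.generate_is_subgroup) auto
  then interpret N: normal H Z2_group by (rule G.subgroup_imp_normal)
  have grpM: "group (Z2_group Mod H)" by (rule N.factorgroup_is_group)
  have kH: "k \<in> H" unfolding H_def by (rule generate.incl) simp
  have ab0: "(a, b) \<noteq> (0, 0)" using k0 kab by auto
  have nH: "(a, b) \<notin> H"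
  proof
    assume "(a, b) \<in> H"
    then obtain m where m: "a = m * (2 * a)" "b = m * (2 * b)" using gen_sub[of k] kab unfolding H_def by auto
    have "1 - 2 * m \<noteq> 0" by presburger
    moreover have "a * (1 - 2 * m) = 0" "b * (1 - 2 * m) = 0" using m by (auto simp: algebra_simps)
    ultimately show False using ab0 by auto
  qed
  define X where "X = H #>\<^bsub>Z2_group\<^esub> (a, b)"
  have XM: "X \<in> carrier (Z2_group Mod H)" unfolding X_def carrier_FactGroup by auto
  have XX: "X \<otimes>\<^bsub>Z2_group Mod H\<^esub> X = H"
  proof -
    have "X \<otimes>\<^bsub>Z2_group Mod H\<^esub> X = H #>\<^bsub>Z2_group\<^esub> ((a,b) \<otimes>\<^bsub>Z2_group\<^esub> (a,b))"
      unfolding X_def mult_FactGroup by (rule N.rcos_sum) auto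
    also have "\<dots> = H #>\<^bsub>Z2_group\<^esub> k" using kab by simp
    also have "\<dots> = H" by (rule subgroup.rcos_const[OF sub G.is_group kH])
    finally show ?thesis .
  qed
  have XnH: "X \<noteq> H"
    using G.rcos_self[OF _ sub, of "(a,b)"] nH unfolding X_def by auto
  obtain \<phi> where \<phi>: "\<phi> \<in> iso (Z2_group Mod H) integer_group" using iso unfolding is_iso_def H_def by auto
  have hom: "\<And>x y. x \<in> carrier (Z2_group Mod H) \<Longrightarrow> y \<in> carrier (Z2_group Mod H) \<Longrightarrow>
     \<phi> (x \<otimes>\<^bsub>Z2_group Mod H\<^esub> y) = \<phi> x + \<phi> y"
    using \<phi> unfolding iso_def hom_def by auto
  have inj: "inj_on \<phi> (carrier (Z2_group Mod H))" using \<phi> unfolding iso_def bij_betw_def by auto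
  have HM: "H \<in> carrier (Z2_group Mod H)" using monoid.one_closed[OF group.is_monoid[OF grpM]] by simp
  have "H \<otimes>\<^bsub>Z2_group Mod H\<^esub> H = H" using monoid.l_one[OF group.is_monoid[OF grpM] HM] by simp
  then have "\<phi> H = 0" using hom[OF HM HM] by simp
  moreover have "\<phi> X + \<phi> X = \<phi> H" using hom[OF XM XM] XX by simp
  ultimately have "\<phi> X = \<phi> H" by simp
  then show False using inj XM HM XnH unfolding inj_on_def by blast
qed

lemma nz_parity:
  assumes "nonzero_in_G k x"
  shows "\<not> (even (fst x) \<and> even (snd x))" "\<not> (even (fst x - fst k) \<and> even (snd x - snd k))"
proof -
  show "\<not> (even (fst x) \<and> even (snd x))"
  proof
    assume "even (fst x) \<and> even (snd x)"
    then have "x = (0 * fst k + 2 * fst (fst x div 2, snd x div 2), 0 * snd k + 2 * snd (fst x div 2, snd x div 2))"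
      by (auto simp: prod_eq_iff)
    then show False using assms unfolding nonzero_in_G_def by blast
  qed
  show "\<not> (even (fst x - fst k) \<and> even (snd x - snd k))"
  proof
    assume "even (fst x - fst k) \<and> even (snd x - snd k)"
    then have "x = (1 * fst k + 2 * fst ((fst x - fst k) div 2, (snd x - snd k) div 2), 1 * snd k + 2 * snd ((fst x - fst k) div 2, (snd x - snd k) div 2))"
      by (auto simp: prod_eq_iff)
    then show False using assms unfolding nonzero_in_G_def by blast
  qed
qed

lemma parity_final:
  assumes "odd (fst k) \<or> odd (snd k)" "nonzero_in_G k x" "nonzero_in_G k y" "nonzero_in_G k w"
    "fst x + fst y + fst w = 0" "snd x + snd y + snd w = 0"
  shows False
  using assms(1,5,6) nz_parity[OF assms(2)] nz_parity[OF assms(3)] nz_parity[OF assms(4)]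
  by presburger


lemma smooth_deriv:
  assumes "smooth_curve c"
  obtains D where "\<And>t. (c has_vector_derivative D t) (at t)"
  using assms unfolding smooth_curve_def by metis

lemma smooth_cont:
  assumes "smooth_curve c" shows "continuous_on UNIV c"
proof -
  obtain D where "\<And>t. (c has_vector_derivative D t) (at t)" using smooth_deriv[OF assms] by blast
  then show ?thesis
    by (meson continuous_at_imp_continuous_on has_vector_derivative_continuous)
qed

lemma torus_eq_fst:
  assumes "torusE p = torusE q" shows "fst p - fst q = of_int (round (fst p - fst q))"
  using assms by (intro cis_int) (auto simp: torusE_def)

lemma torus_eq_snd:
  assumes "torusE p = torusE q" shows "snd p - snd q = of_int (round (snd p - snd q))"
  using assms by (intro cis_int) (auto simp: torusE_def)

lemma crossing_int:
  assumes "is_crossing c s t"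
  shows "of_int (fst (smoothing_class c s t)) = fst (c t) - fst (c s)"
        "of_int (snd (smoothing_class c s t)) = snd (c t) - snd (c s)"
proof -
  have e: "torusE (c t) = torusE (c s)" using assms unfolding is_crossing_def by simp
  show "of_int (fst (smoothing_class c s t)) = fst (c t) - fst (c s)"
    using torus_eq_fst[OF e] by (simp add: smoothing_class_def intpt_def)
  show "of_int (snd (smoothing_class c s t)) = snd (c t) - snd (c s)"
    using torus_eq_snd[OF e] by (simp add: smoothing_class_def intpt_def)
qed

lemma k_nonzero:
  assumes diagram: "knot_diagram c h" and global: "global_wrt v c"
  shows "knot_class c \<noteq> (0, 0)"
proof
  assume k0: "knot_class c = (0, 0)"
  have sc: "smooth_curve c" using diagram unfolding knot_diagram_def by auto
  obtain D where D: "\<And>t. (c has_vector_derivative D t) (at t)" using smooth_deriv[OF sc] by blast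
  have pos: "det2 (D t) v > 0" for t
    using global D unfolding global_wrt_def by (metis vector_derivative_at)
  define g where "g = (\<lambda>t. det2 (c t) v)"
  have der: "DERIV g t :> det2 (D t) v" for t
  proof -
    have bl: "bounded_linear (\<lambda>u. det2 u v)"
      unfolding det2_def by (intro bounded_linear_intros)
    have "((\<lambda>t. det2 (c t) v) has_derivative (\<lambda>x. det2 (x *\<^sub>R D t) v)) (at t)"
      using bounded_linear.has_derivative[OF bl D[of t, unfolded has_vector_derivative_def]] .
    moreover have "(\<lambda>x. det2 (x *\<^sub>R D t) v) = (*) (det2 (D t) v)"
      by (auto simp: det2_def algebra_simps)
    ultimately show ?thesis unfolding g_def has_field_derivative_def by metis
  qed
  have "g 0 < g 1"
    by (rule DERIV_pos_imp_increasing[of 0 1]) (use der pos in auto)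
  moreover have "c 1 = c 0"
  proof -
    have e: "torusE (c 1) = torusE (c 0)" using diagram unfolding knot_diagram_def
      by (metis add_0)
    have "fst (c 1) - fst (c 0) = 0" "snd (c 1) - snd (c 0) = 0"
      using torus_eq_fst[OF e] torus_eq_snd[OF e] k0 by (auto simp: knot_class_def intpt_def)
    then show ?thesis by (simp add: prod_eq_iff)
  qed
  ultimately show False unfolding g_def by simp
qed

theorem mainTheorem5:
  fixes c :: "real \<Rightarrow> real \<times> real" and h :: "real \<Rightarrow> real"
    and \<alpha> \<beta> :: "int \<times> int" and v :: "real \<times> real" and \<sigma> :: real
  assumes basis: "fst \<alpha> * snd \<beta> - snd \<alpha> * fst \<beta> \<in> {1, -1}"
    and sigma: "\<sigma> \<in> {1, -1}"
    and v_def: "v = (\<sigma> / norm (real_of_int (fst \<beta>), real_of_int (snd \<beta>)))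
                     *\<^sub>R (real_of_int (fst \<beta>), real_of_int (snd \<beta>))"
    and diagram: "knot_diagram c h"
    and global: "global_wrt v c"
    and pure: "Z2_pure c"
  shows "\<not> has_triangle c"
proof
  assume "has_triangle c"
  then obtain p1 r1 p2 r2 p3 r3 z where
    c1: "is_crossing c r3 p1" and c2: "is_crossing c r1 p2" and c3: "is_crossing c r2 p3" and
    hom: "homotopic_loops torus
               (subpath p1 r1 (torusE \<circ> c) +++ subpath p2 r2 (torusE \<circ> c)
                  +++ subpath p3 r3 (torusE \<circ> c))
               (linepath z z)"
    unfolding has_triangle_def by blast
  have cc: "continuous_on UNIV c" using diagram smooth_cont unfolding knot_diagram_def by blast
  have cf: "continuous_on UNIV (\<lambda>t. fst (c t))" "continuous_on UNIV (\<lambda>t. snd (c t))"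
    using cc by (auto intro!: continuous_intros)
  have j1: "(torusE \<circ> c) r1 = (torusE \<circ> c) p2" using c2 unfolding is_crossing_def by simp
  have j2: "(torusE \<circ> c) r2 = (torusE \<circ> c) p3" using c3 unfolding is_crossing_def by simp
  have s1: "(fst (c r1) - fst (c p1)) + (fst (c r2) - fst (c p2)) + (fst (c r3) - fst (c p3)) = 0"
    by (rule proj_sum[where P = fst and S = torus and g = "torusE \<circ> c", OF _ _ _ cf(1) j1 j2 hom])
       (auto intro!: continuous_intros simp: torus_def torusE_def o_def)
  have s2: "(snd (c r1) - snd (c p1)) + (snd (c r2) - snd (c p2)) + (snd (c r3) - snd (c p3)) = 0"
    by (rule proj_sum[where P = snd and S = torus and g = "torusE \<circ> c", OF _ _ _ cf(2) j1 j2 hom])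
       (auto intro!: continuous_intros simp: torus_def torusE_def o_def)
  define N1 where "N1 = smoothing_class c r1 p2"
  define N2 where "N2 = smoothing_class c r2 p3"
  define N3 where "N3 = smoothing_class c r3 p1"
  have "real_of_int (fst N1 + fst N2 + fst N3) = 0"
    using crossing_int[OF c1] crossing_int[OF c2] crossing_int[OF c3] s1
    unfolding N1_def N2_def N3_def by simp
  then have f0: "fst N1 + fst N2 + fst N3 = 0" by linarith
  have "real_of_int (snd N1 + snd N2 + snd N3) = 0"
    using crossing_int[OF c1] crossing_int[OF c2] crossing_int[OF c3] s2
    unfolding N1_def N2_def N3_def by simp
  then have f1: "snd N1 + snd N2 + snd N3 = 0" by linarith
  have odd: "odd (fst (knot_class c)) \<or> odd (snd (knot_class c))"
    using iso_parity pure k_nonzero[OF diagram global] unfolding Z2_pure_def by blast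
  show False
    using parity_final[OF odd _ _ _ f0 f1] pure c1 c2 c3 unfolding Z2_pure_def N1_def N2_def N3_def
    by blast
qed

end
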